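(* Let $n,k$ be odd integers with $2<2k\le n$. Suppose the integer program $( * )$ has a solution but no trivial solution, and let $(\mathsf{u},\mathsf{v}_+,\mathsf{v}_-,r,t)$ be a solution of $( * )$. Then $$\chi_c(\mathrm{Pet}(n,k))\ \ge\ 2+\frac{4r}{4r^2+2r+1}.$$
   Context: For integers $n,k$ with $2<2k\le n$, the generalized Petersen graph $\mathrm{Pet}(n,k)$ has vertex set $\{u_0,\dots,u_{n-1}\}\cup\{v_0,\dots,v_{n-1}\}$ and edge set $\{u_iu_{i+1}\}\cup\{u_iv_i\}\cup\{v_iv_{i+k}\}$, indices modulo $n$. The integer program $( * )$ is: minimize $\mathsf{u}+\mathsf{v}_++\mathsf{v}_-$ over integers $\mathsf{u},\mathsf{v}_+,\mathsf{v}_-,r\ge 0$ and $t\in\mathbb{Z}$ subject to $\mathsf{u}+k(\mathsf{v}_+-\mathsf{v}_-)=tn$ and $\mathsf{u}+\mathsf{v}_++\mathsf{v}_-=2r+1$. A solution is a minimizer; it is trivial if $\mathsf{u}=0$ or $\mathsf{v}_++\mathsf{v}_-=0$. For integers $p\ge 2q\ge 2$, the circular complete graph $K_{p/q}$ has vertex set $\{0,\dots,p-1\}$ with $i\sim j$ iff $q\le|i-j|\le p-q$; the circular chromatic number $\chi_c(G)$ is the minimum of $p/q$ over all such $p,q$ for which $G$ admits a homomorphism to $K_{p/q}$. *)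

theory Defs
  imports Complex_Main
begin

text \<open>Generalized Petersen graph Pet(n,k). Vertex (False,i) is u_i, (True,i) is v_i, 0 <= i < n.\<close>

definition pet_verts :: "nat \<Rightarrow> (bool \<times> nat) set" where
  "pet_verts n = {(b, i). i < n}"

definition pet_edge :: "nat \<Rightarrow> nat \<Rightarrow> (bool \<times> nat) \<Rightarrow> (bool \<times> nat) \<Rightarrow> bool" where
  "pet_edge n k x y \<longleftrightarrow>
     (\<exists>i<n. (x = (False, i) \<and> y = (False, (i + 1) mod n))
           \<or> (x = (False, i) \<and> y = (True, i))
           \<or> (x = (True, i) \<and> y = (True, (i + k) mod n)))"

definition pet_adj :: "nat \<Rightarrow> nat \<Rightarrow> (bool \<times> nat) \<Rightarrow> (bool \<times> nat) \<Rightarrow> bool" where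
  "pet_adj n k x y \<longleftrightarrow> pet_edge n k x y \<or> pet_edge n k y x"

definition circ_adj :: "nat \<Rightarrow> nat \<Rightarrow> nat \<Rightarrow> nat \<Rightarrow> bool" where
  "circ_adj p q i j \<longleftrightarrow> q \<le> nat \<bar>int i - int j\<bar> \<and> nat \<bar>int i - int j\<bar> \<le> p - q"

definition circ_hom :: "'a set \<Rightarrow> ('a \<Rightarrow> 'a \<Rightarrow> bool) \<Rightarrow> nat \<Rightarrow> nat \<Rightarrow> ('a \<Rightarrow> nat) \<Rightarrow> bool" where
  "circ_hom V adj p q f \<longleftrightarrow>
     (\<forall>x\<in>V. f x < p) \<and> (\<forall>x\<in>V. \<forall>y\<in>V. adj x y \<longrightarrow> circ_adj p q (f x) (f y))"

definition circular_chromatic_number :: "'a set \<Rightarrow> ('a \<Rightarrow> 'a \<Rightarrow> bool) \<Rightarrow> real" where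
  "circular_chromatic_number V adj =
     Inf {real p / real q | p q. 2 * q \<le> p \<and> 1 \<le> q \<and> (\<exists>f. circ_hom V adj p q f)}"

definition ip_feasible :: "nat \<Rightarrow> nat \<Rightarrow> nat \<Rightarrow> nat \<Rightarrow> nat \<Rightarrow> nat \<Rightarrow> int \<Rightarrow> bool" where
  "ip_feasible n k u vp vm r t \<longleftrightarrow>
     int u + int k * (int vp - int vm) = t * int n \<and> u + vp + vm = 2 * r + 1"

definition ip_solution :: "nat \<Rightarrow> nat \<Rightarrow> nat \<Rightarrow> nat \<Rightarrow> nat \<Rightarrow> nat \<Rightarrow> int \<Rightarrow> bool" where
  "ip_solution n k u vp vm r t \<longleftrightarrow> ip_feasible n k u vp vm r t \<and>
     (\<forall>u' vp' vm' r' t'. ip_feasible n k u' vp' vm' r' t' \<longrightarrow> u + vp + vm \<le> u' + vp' + vm')"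

definition ip_trivial :: "nat \<Rightarrow> nat \<Rightarrow> nat \<Rightarrow> bool" where
  "ip_trivial u vp vm \<longleftrightarrow> u = 0 \<or> vp + vm = 0"

end

theory Submission
  imports Defs
begin

definition Yv :: "nat \<Rightarrow> ('a \<Rightarrow> nat) \<Rightarrow> 'a \<Rightarrow> 'a \<Rightarrow> int" where
  "Yv p f x y = 2 * ((int (f y) - int (f x)) mod int p) - int p"
definition Hv :: "nat \<Rightarrow> ('a \<Rightarrow> nat) \<Rightarrow> 'a \<Rightarrow> 'a \<Rightarrow> int" where
  "Hv p f x y = - 2 * ((int (f y) - int (f x)) div int p) - 1"

lemma Y_eq: "Yv p f x y = 2*(int (f y) - int (f x)) + int p * Hv p f x y"
proof -
  define a where "a = int (f y) - int (f x)"
  have h: "a = int p * (a div int p) + a mod int p" by simp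
  obtain D M where DM: "a div int p = D" "a mod int p = M" by blast
  have h2: "a = int p * D + M" using h DM by metis
  show ?thesis unfolding Yv_def Hv_def a_def[symmetric] DM
    using h2 by (simp add: algebra_simps)
qed

lemma Y_cases:
  assumes "f x < p" "f y < p" "circ_adj p q (f x) (f y)" "1 \<le> q" "2*q \<le> p"
  shows "(int (f y) - int (f x) > 0 \<and> (int (f y) - int (f x)) mod int p = int (f y) - int (f x)
          \<and> int q \<le> int (f y) - int (f x) \<and> int (f y) - int (f x) \<le> int p - int q) \<or>
         (int (f y) - int (f x) < 0 \<and> (int (f y) - int (f x)) mod int p = int (f y) - int (f x) + int p
          \<and> int q \<le> int (f x) - int (f y) \<and> int (f x) - int (f y) \<le> int p - int q)"
proof -
  define a where "a = int (f y) - int (f x)"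
  have c: "int q \<le> \<bar>a\<bar>" "\<bar>a\<bar> \<le> int p - int q"
    using assms(3,5) unfolding circ_adj_def a_def by auto
  have lt: "\<bar>a\<bar> < int p" using assms(1,2) unfolding a_def by auto
  show ?thesis
  proof (cases "a > 0")
    case True
    then have "a mod int p = a" using lt by (simp add: mod_pos_pos_trivial)
    then show ?thesis using True c unfolding a_def by auto
  next
    case False
    then have neg: "a < 0" using c assms(4) by auto
    have "(a + int p) mod int p = a + int p" using lt neg by (intro mod_pos_pos_trivial) auto
    moreover have "(a + int p) mod int p = a mod int p" by simp
    ultimately have "a mod int p = a + int p" by simp
    then show ?thesis using neg c unfolding a_def by auto
  qed
qed

lemma Y_bound:
  assumes "f x < p" "f y < p" "circ_adj p q (f x) (f y)" "1 \<le> q" "2*q \<le> p"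
  shows "\<bar>Yv p f x y\<bar> \<le> int p - 2*int q"
  using Y_cases[of f x p y q, OF assms] unfolding Yv_def by auto

lemma Y_anti:
  assumes "f x < p" "f y < p" "circ_adj p q (f x) (f y)" "1 \<le> q" "2*q \<le> p"
  shows "Yv p f y x = - Yv p f x y"
proof -
  have c2: "circ_adj p q (f y) (f x)" using assms(3) unfolding circ_adj_def by (simp add: abs_minus_commute)
  show ?thesis
    using Y_cases[of f x p y q, OF assms] Y_cases[of f y p x q, OF assms(2,1) c2 assms(4,5)] unfolding Yv_def by auto
qed

definition posn :: "nat \<Rightarrow> nat \<Rightarrow> nat \<Rightarrow> nat \<Rightarrow> nat \<Rightarrow> nat \<Rightarrow> nat" where
  "posn n k u vp i m = i + u + (if m \<le> vp then m*k else vp*k + (m - vp)*(n-k))"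

definition wk :: "nat \<Rightarrow> nat \<Rightarrow> nat \<Rightarrow> nat \<Rightarrow> nat \<Rightarrow> nat \<Rightarrow> nat \<Rightarrow> bool \<times> nat" where
  "wk n k u vp vm i j = (if j \<le> u then (False, (i+j) mod n)
     else if j \<le> u+1+vp+vm then (True, posn n k u vp i (j-u-1) mod n) else (False, i mod n))"

lemma posn_end:
  assumes "0 < n" "k \<le> n" "int u + int k*(int vp - int vm) = t*int n"
  shows "posn n k u vp i (vp+vm) mod n = i mod n"
proof -
  have e: "posn n k u vp i (vp+vm) = i + u + vp*k + vm*(n-k)"
    unfolding posn_def by (cases "vm = 0") auto
  have "int (posn n k u vp i (vp+vm)) = int i + (int vm + t) * int n"
  proof -
    have d: "int (vm*(n-k)) = int vm*int n - int vm*int k" using assms(2) by (simp add: of_nat_diff right_diff_distrib)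
    have "int (i + u + vp*k + vm*(n-k)) = int i + int u + int vp * int k + (int vm*int n - int vm*int k)"
      using d by simp
    also have "\<dots> = int i + (int vm + t) * int n" using assms(3) by (simp add: algebra_simps)
    finally show ?thesis unfolding e .
  qed
  then have "int (posn n k u vp i (vp+vm) mod n) = (int i + (int vm + t) * int n) mod int n"
    by (simp add: of_nat_mod)
  also have "\<dots> = int i mod int n" by simp
  also have "\<dots> = int (i mod n)" by (simp add: of_nat_mod)
  finally show ?thesis by simp
qed

lemma wk_adj:
  assumes "0 < n" "k \<le> n" "int u + int k*(int vp - int vm) = t*int n" "j < u+vp+vm+2"
  shows "pet_adj n k (wk n k u vp vm i j) (wk n k u vp vm i (Suc j))"
proof -
  consider (rim) "j < u" | (sp) "j = u" | (inn) "u < j" "j < u+1+vp+vm" | (last) "j = u+1+vp+vm"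
    using assms(4) by linarith
  then show ?thesis
  proof cases
    case rim
    have "pet_edge n k (False, (i+j) mod n) (False, (i + Suc j) mod n)"
      unfolding pet_edge_def using assms(1)
      by (intro exI[of _ "(i+j) mod n"]) (simp add: mod_Suc_eq)
    then show ?thesis using rim unfolding wk_def pet_adj_def by auto
  next
    case sp
    have "pet_edge n k (False, (i+u) mod n) (True, (i + u) mod n)"
      unfolding pet_edge_def using assms(1)
      by (intro exI[of _ "(i+u) mod n"]) simp
    then show ?thesis using sp unfolding wk_def pet_adj_def by (simp add: posn_def)
  next
    case inn
    define m where "m = j - u - 1"
    have m: "m < vp + vm" "j - u - 1 = m" "Suc j - u - 1 = Suc m" using inn unfolding m_def by auto
    show ?thesis
    proof (cases "m < vp")
      case True
      have pe: "posn n k u vp i (Suc m) = posn n k u vp i m + k" using True unfolding posn_def by auto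
      have "pet_edge n k (True, posn n k u vp i m mod n) (True, (posn n k u vp i m + k) mod n)"
        unfolding pet_edge_def using assms(1)
        by (intro exI[of _ "posn n k u vp i m mod n"]) (simp add: mod_add_left_eq)
      then show ?thesis using inn m pe unfolding wk_def pet_adj_def by auto
    next
      case False
      have pe: "posn n k u vp i (Suc m) = posn n k u vp i m + (n - k)" using False unfolding posn_def
        by (auto simp: Suc_diff_le algebra_simps)
      have "(posn n k u vp i m + (n - k)) mod n + k = n + posn n k u vp i m \<or> True" by simp
      have x: "((posn n k u vp i m + (n - k)) mod n + k) mod n = posn n k u vp i m mod n"
      proof -
        have "((posn n k u vp i m + (n - k)) mod n + k) mod n = (posn n k u vp i m + (n - k) + k) mod n"
          by (simp add: mod_add_left_eq)
        also have "posn n k u vp i m + (n - k) + k = posn n k u vp i m + n" using assms(2) by simp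
        finally show ?thesis by simp
      qed
      have "pet_edge n k (True, (posn n k u vp i m + (n - k)) mod n) (True, posn n k u vp i m mod n)"
        unfolding pet_edge_def using assms(1) x
        by (intro exI[of _ "(posn n k u vp i m + (n - k)) mod n"]) simp
      then show ?thesis using inn m pe unfolding wk_def pet_adj_def by auto
    qed
  next
    case last
    have "pet_edge n k (False, i mod n) (True, i mod n)"
      unfolding pet_edge_def using assms(1) by (intro exI[of _ "i mod n"]) simp
    then show ?thesis using last posn_end[OF assms(1-3), of i] unfolding wk_def pet_adj_def by auto
  qed
qed

lemma wk_in: "0 < n \<Longrightarrow> wk n k u vp vm i j \<in> pet_verts n"
  unfolding wk_def pet_verts_def by auto

lemma wk_period: "wk n k u vp vm (i + n) j = wk n k u vp vm i j"
proof -
  have "posn n k u vp (i+n) m = posn n k u vp i m + n" for m unfolding posn_def by simp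
  moreover have "(i + n + j) mod n = (i + j) mod n" by (metis add.commute add.left_commute mod_add_self2)
  moreover have "(x + n) mod n = x mod n" for x by simp
  ultimately show ?thesis unfolding wk_def by simp
qed

lemma wk_period_mult: "wk n k u vp vm (i + c*n) j = wk n k u vp vm i j"
proof (induction c)
  case 0 then show ?case by simp
next
  case (Suc c)
  have "i + Suc c * n = (i + c*n) + n" by simp
  then show ?case using Suc wk_period by metis
qed

lemma key:
  assumes "odd n" "k \<le> n" "ip_feasible n k u vp vm r t" "1 \<le> q" "2*q \<le> p"
    "circ_hom (pet_verts n) (pet_adj n k) p q f"
  shows "(4*r+4)*q \<le> (2*r+1)*p"
proof (rule ccontr)
  assume contra: "\<not> (4*r+4)*q \<le> (2*r+1)*p"
  have n0: "0 < n" using assms(1) by (cases n) auto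
  have feq: "int u + int k*(int vp - int vm) = t*int n" and rs: "u + vp + vm = 2*r+1"
    using assms(3) unfolding ip_feasible_def by auto
  define L where "L = u+vp+vm+2"
  define W where "W = wk n k u vp vm"
  define E where "E = int p - 2 * int q"
  define T where "T i = (\<Sum>j<L. Yv p f (W i j) (W i (Suc j)))" for i
  define Od where "Od i = (\<Sum>j<L. Hv p f (W i j) (W i (Suc j)))" for i
  define z where "z a = Yv p f (False, a mod n) (True, a mod n)" for a
  have hp: "\<forall>x\<in>pet_verts n. f x < p" "\<forall>x\<in>pet_verts n. \<forall>y\<in>pet_verts n. pet_adj n k x y \<longrightarrow> circ_adj p q (f x) (f y)"
    using assms(6) unfolding circ_hom_def by auto
  have WV: "W i j \<in> pet_verts n" for i j unfolding W_def using wk_in[OF n0] .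
  have adjW: "circ_adj p q (f (W i j)) (f (W i (Suc j)))" if "j < L" for i j
    using hp(2) WV wk_adj[OF n0 assms(2) feq, of j i] that unfolding L_def W_def by blast
  have fW: "f (W i j) < p" for i j using hp(1) WV by blast
  have Ybd: "\<bar>Yv p f (W i j) (W i (Suc j))\<bar> \<le> E" if "j < L" for i j
    unfolding E_def using Y_bound[of f "W i j" p "W i (Suc j)" q, OF fW fW adjW[OF that] assms(4,5)] .
  have spV: "(False, a mod n) \<in> pet_verts n" "(True, a mod n) \<in> pet_verts n" for a
    using n0 unfolding pet_verts_def by auto
  have spadj: "pet_adj n k (False, a mod n) (True, a mod n)" for a
    unfolding pet_adj_def pet_edge_def using n0 by auto
  have zbd: "\<bar>z a\<bar> \<le> E" for a
    unfolding z_def E_def using Y_bound[of f "(False, a mod n)" p "(True, a mod n)" q, OF hp(1)[rule_format, OF spV(1)] hp(1)[rule_format, OF spV(2)]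
      hp(2)[rule_format, OF spV(1) spV(2) spadj] assms(4,5)] .
  have WL: "W i L = W i 0" for i unfolding W_def wk_def L_def by simp
  have T_eq: "T i = int p * Od i" for i
  proof -
    have "T i = (\<Sum>j<L. 2*(int (f (W i (Suc j))) - int (f (W i j))) + int p * Hv p f (W i j) (W i (Suc j)))"
      unfolding T_def by (rule sum.cong) (simp_all only: Y_eq)
    also have "\<dots> = 2 * (\<Sum>j<L. int (f (W i (Suc j))) - int (f (W i j))) + int p * Od i"
      unfolding Od_def by (simp add: sum.distrib sum_distrib_left)
    also have "(\<Sum>j<L. int (f (W i (Suc j))) - int (f (W i j))) = 0"
      using sum_lessThan_telescope[of "\<lambda>j. int (f (W i j))" L] WL by simp
    finally show ?thesis by simp
  qed
  have Od_odd: "odd (Od i)" for i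
  proof -
    have "Od i = (\<Sum>j<L. - 2 * ((int (f (W i (Suc j))) - int (f (W i j))) div int p) - 1)"
      unfolding Od_def Hv_def by simp
    also have "\<dots> = - 2 * (\<Sum>j<L. (int (f (W i (Suc j))) - int (f (W i j))) div int p) - int L"
      by (simp add: sum_subtractf sum_distrib_left)
    finally have "Od i = - 2 * (\<Sum>j<L. (int (f (W i (Suc j))) - int (f (W i j))) div int p) - int L" .
    moreover have "odd (int L)" using rs unfolding L_def by simp
    ultimately show ?thesis by simp
  qed
  define S where "S = {..<L} - {u, L-1}"
  define \<rho> where "\<rho> i = (\<Sum>j\<in>S. Yv p f (W i j) (W i (Suc j)))" for i
  have uL: "u \<in> {..<L}" "L - 1 \<in> {..<L} - {u}" "u \<noteq> L - 1" unfolding L_def by auto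
  have T_split: "T i = \<rho> i + z (i+u) - z i" for i
  proof -
    have "T i = Yv p f (W i u) (W i (Suc u)) + (Yv p f (W i (L-1)) (W i (Suc (L-1)))
              + \<rho> i)"
      unfolding T_def \<rho>_def S_def
      using sum.remove[OF _ uL(1), of "\<lambda>j. Yv p f (W i j) (W i (Suc j))"]
        sum.remove[OF _ uL(2), of "\<lambda>j. Yv p f (W i j) (W i (Suc j))"] by (simp add: Diff_insert2[symmetric] insert_commute)
    moreover have "Yv p f (W i u) (W i (Suc u)) = z (i+u)"
      unfolding W_def wk_def z_def posn_def by simp
    moreover have "Yv p f (W i (L-1)) (W i (Suc (L-1))) = - z i"
    proof -
      have s: "Suc (L-1) = L" unfolding L_def by simp
      have a: "Yv p f (W i (Suc (L-1))) (W i (L-1)) = - Yv p f (W i (L-1)) (W i (Suc (L-1)))"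
        using Y_anti[of f "W i (L-1)" p "W i (Suc (L-1))" q, OF fW fW adjW assms(4,5)] unfolding L_def by simp
      have "W i (Suc (L-1)) = (False, i mod n)" unfolding s WL unfolding W_def wk_def by simp
      moreover have "W i (L-1) = (True, i mod n)"
        unfolding W_def wk_def L_def using posn_end[OF n0 assms(2) feq, of i] by simp
      ultimately show ?thesis using a unfolding z_def by simp
    qed
    ultimately show ?thesis by simp
  qed
  have cardS: "card S = L - 2"
  proof -
    have "card {u, L-1} = 2" using uL(3) by simp
    moreover have "{u, L-1} \<subseteq> {..<L}" using uL by auto
    ultimately show ?thesis unfolding S_def by (simp add: card_Diff_subset)
  qed
  have rbd: "\<bar>\<rho> i\<bar> \<le> int (L-2) * E" for i
  proof -
    have "\<bar>\<rho> i\<bar> \<le> (\<Sum>j\<in>S. \<bar>Yv p f (W i j) (W i (Suc j))\<bar>)" unfolding \<rho>_def by (rule sum_abs)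
    also have "\<dots> \<le> of_nat (card S) * E"
      by (rule sum_bounded_above) (use Ybd S_def in auto)
    finally show ?thesis using cardS by simp
  qed
  have p0: "0 < int p" using assms(4,5) by simp
  have small: "(2*int r+2) * E < int p"
  proof -
    have "(2*r+1)*p < (4*r+4)*q" using contra by simp
    then have "(2*int r+1)*int p < (4*int r+4)*int q" by (metis (mono_tags) of_nat_less_iff of_nat_mult of_nat_add of_nat_1 of_nat_numeral)
    then show ?thesis unfolding E_def by (simp add: algebra_simps)
  qed
  have flip: "Od (i+u) = - Od i" for i
  proof -
    have "int p * (Od i + Od (i+u)) = \<rho> i + \<rho> (i+u) + z (i+u+u) - z i"
      using T_split[of i] T_split[of "i+u"] T_eq[of i] T_eq[of "i+u"] by (simp add: algebra_simps)
    then have "\<bar>int p * (Od i + Od (i+u))\<bar> \<le> 2 * int (L-2) * E + 2 * E"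
      using rbd[of i] rbd[of "i+u"] zbd[of "i+u+u"] zbd[of i] by linarith
    also have "\<dots> = 2 * ((2*int r+2) * E)" using rs unfolding L_def by (simp add: algebra_simps)
    also have "\<dots> < 2 * int p" using small by simp
    finally have "int p * \<bar>Od i + Od (i+u)\<bar> < int p * 2" by (simp add: abs_mult)
    then have "\<bar>Od i + Od (i+u)\<bar> < 2" using p0 by (simp add: mult_less_cancel_left)
    moreover have "even (Od i + Od (i+u))" using Od_odd[of i] Od_odd[of "i+u"] by simp
    ultimately show ?thesis by presburger
  qed
  have iter: "Od (m*u) = (-1)^m * Od 0" for m
  proof (induction m)
    case 0 then show ?case by simp
  next
    case (Suc m)
    have "Suc m * u = m*u + u" by simp
    then show ?case using flip[of "m*u"] Suc by (simp add: add.commute)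
  qed
  have "Od (n*u) = Od 0"
  proof -
    have "Od (0 + u*n) = Od 0" unfolding Od_def W_def wk_period_mult by simp
    then show ?thesis by (simp add: mult.commute)
  qed
  then have "Od 0 = - Od 0" using iter[of n] assms(1) by simp
  then have "Od 0 = 0" by simp
  then show False using Od_odd[of 0] by simp
qed

lemma real_bound:
  fixes R P Q :: real
  assumes "0 \<le> R" "0 < Q" "(4*R+4)*Q \<le> (2*R+1)*P"
  shows "2 + 4 * R / (4 * R ^ 2 + 2 * R + 1) \<le> P / Q"
proof -
  have D: "0 < 4 * R ^ 2 + 2 * R + 1" using assms(1) by (simp add: add_nonneg_pos)
  have "2 + 4 * R / (4 * R ^ 2 + 2 * R + 1) \<le> (4*R+4)/(2*R+1)"
    using D assms(1) by (simp add: field_simps power2_eq_square)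
  also have "\<dots> \<le> P / Q" using assms by (simp add: field_simps)
  finally show ?thesis .
qed

lemma pet_adj_neq:
  assumes "0 < k" "k < n" "pet_adj n k x y" shows "x \<noteq> y"
proof -
  have ne: "\<not> pet_edge n k w w" for w
  proof
    assume "pet_edge n k w w"
    then obtain i where i: "i < n" "(i + 1) mod n = i \<or> (i + k) mod n = i" unfolding pet_edge_def by auto
    show False
    proof (cases "(i + 1) mod n = i")
      case True
      then show False using i assms by (cases "i + 1 < n") (auto simp: mod_if)
    next
      case False
      then have "(i + k) mod n = i" using i by auto
      show False
      proof (cases "i + k < n")
        case True then show False using \<open>(i + k) mod n = i\<close> assms by simp
      next
        case False
        then have "(i + k) mod n = (i + k - n) mod n" by (simp add: le_mod_geq)
        also have "\<dots> = i + k - n" using i(1) assms by simp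
        finally show False using \<open>(i + k) mod n = i\<close> assms False by simp
      qed
    qed
  qed
  show ?thesis using assms(3) ne unfolding pet_adj_def by blast
qed

theorem corollary4:
  fixes n k u vp vm r :: nat and t :: int
  assumes "odd n" and "odd k" and "2 < 2 * k" and "2 * k \<le> n"
    and "\<exists>u' vp' vm' r' t'. ip_solution n k u' vp' vm' r' t'"
    and "\<forall>u' vp' vm' r' t'. ip_solution n k u' vp' vm' r' t' \<longrightarrow> \<not> ip_trivial u' vp' vm'"
    and "ip_solution n k u vp vm r t"
  shows "circular_chromatic_number (pet_verts n) (pet_adj n k)
           \<ge> 2 + 4 * real r / (4 * real r ^ 2 + 2 * real r + 1)"
proof -
  define S where "S = {real p / real q | p q. 2 * q \<le> p \<and> 1 \<le> q \<and> (\<exists>f. circ_hom (pet_verts n) (pet_adj n k) p q f)}"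
  have feas: "ip_feasible n k u vp vm r t" using assms(7) unfolding ip_solution_def by auto
  have kn: "k \<le> n" "0 < k" "k < n" using assms(3,4) by auto
  have ne: "S \<noteq> {}"
  proof -
    define f0 where "f0 x = (if fst x then n else 0) + snd x" for x :: "bool \<times> nat"
    have "circ_hom (pet_verts n) (pet_adj n k) (2*n) 1 f0"
      unfolding circ_hom_def
    proof (intro conjI ballI impI)
      fix x assume "x \<in> pet_verts n" then show "f0 x < 2*n" unfolding pet_verts_def f0_def by auto
    next
      fix x y assume xy: "x \<in> pet_verts n" "y \<in> pet_verts n" "pet_adj n k x y"
      have "x \<noteq> y" using pet_adj_neq[OF kn(2,3) xy(3)] .
      then have "f0 x \<noteq> f0 y" using xy(1,2) unfolding f0_def pet_verts_def
        by (auto simp: prod_eq_iff split: if_splits)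
      moreover have "f0 x < 2*n" "f0 y < 2*n" using xy(1,2) unfolding pet_verts_def f0_def by auto
      ultimately show "circ_adj (2*n) 1 (f0 x) (f0 y)" unfolding circ_adj_def by auto
    qed
    then have "real (2*n) / real 1 \<in> S" unfolding S_def using kn by fastforce
    then show ?thesis by blast
  qed
  have lb: "2 + 4 * real r / (4 * real r ^ 2 + 2 * real r + 1) \<le> x" if "x \<in> S" for x
  proof -
    have "\<exists>p q. x = real p / real q \<and> 2*q \<le> p \<and> 1 \<le> q \<and> (\<exists>f. circ_hom (pet_verts n) (pet_adj n k) p q f)"
      using that unfolding S_def by blast
    then obtain p q f where pq: "x = real p / real q" "2*q \<le> p" "1 \<le> q" "circ_hom (pet_verts n) (pet_adj n k) p q f"
      by blast
    have "(4*r+4)*q \<le> (2*r+1)*p" using key[OF assms(1) kn(1) feas pq(3,2,4)] .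
    then have "(4*real r+4)*real q \<le> (2*real r+1)*real p"
      by (metis (mono_tags) of_nat_le_iff of_nat_mult of_nat_add of_nat_1 of_nat_numeral)
    then show ?thesis using real_bound[of "real r" "real q" "real p"] pq(1,3) by simp
  qed
  show ?thesis unfolding circular_chromatic_number_def S_def[symmetric]
    by (rule cInf_greatest[OF ne lb]) 
qed

end
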